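(* Let $q \geq 5$ be a prime power and let $\mathcal{X}$ be a plane curve of degree $q-1$ defined over $\mathbb{F}_q$ without $\mathbb{F}_q$-linear components with $\mathrm{N}_q(\mathcal{X}) = (q-1)^2$. Let $i, j$ be (not necessarily distinct) non-negative integers and suppose $l_1, l_2$ are distinct lines defined over $\mathbb{F}_q$ with $\#(l_1 \cap \mathcal{X}(\mathbb{F}_q)) = i$ and $\#(l_2 \cap \mathcal{X}(\mathbb{F}_q)) = j$. If the point $P = l_1 \cap l_2$ lies in $\mathcal{X}(\mathbb{F}_q)$, then $i + j \geq q$.
   Context: $\mathcal{X}(\mathbb{F}_q)=\mathcal{X}\cap\mathbb{P}^2(\mathbb{F}_q)$, $\mathrm{N}_q(\mathcal{X})=\#\mathcal{X}(\mathbb{F}_q)$; "without $\mathbb{F}_q$-linear components" means no line defined over $\mathbb{F}_q$ is a component of $\mathcal{X}$. *)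

theory Defs
  imports "HOL-Computational_Algebra.Polynomial" "HOL-Library.Cardinality"
begin

text \<open>Trivariate polynomials F(X,Y,Z) over a ring, as iterated univariate polynomials:
  outermost variable Z, then Y, innermost X.\<close>
type_synonym 'a poly3 = "'a poly poly poly"

definition mcoeff :: "'a::zero poly3 \<Rightarrow> nat \<Rightarrow> nat \<Rightarrow> nat \<Rightarrow> 'a" where
  "mcoeff F a b c = coeff (coeff (coeff F c) b) a"

definition homogeneous3 :: "'a::zero poly3 \<Rightarrow> nat \<Rightarrow> bool" where
  "homogeneous3 F d \<longleftrightarrow> (\<forall>a b c. mcoeff F a b c \<noteq> 0 \<longrightarrow> a + b + c = d)"

definition eval3 :: "'a::comm_semiring_0 poly3 \<Rightarrow> 'a \<Rightarrow> 'a \<Rightarrow> 'a \<Rightarrow> 'a" where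
  "eval3 F x y z = poly (poly (poly F [:[:z:]:]) [:y:]) x"

text \<open>The linear form aX + bY + cZ.\<close>
definition linear_form :: "'a::comm_ring_1 \<Rightarrow> 'a \<Rightarrow> 'a \<Rightarrow> 'a poly3" where
  "linear_form a b c = [: [: [:0, a:], [:b:] :], [:[:c:]:] :]"

text \<open>Points of P^2(F_q), via normalized representatives (first nonzero coordinate is 1).\<close>
definition proj_points :: "('a::field \<times> 'a \<times> 'a) set" where
  "proj_points = {(x, y, z). x = 1 \<or> (x = 0 \<and> y = 1) \<or> (x = 0 \<and> y = 0 \<and> z = 1)}"

definition curve_points :: "'a::field poly3 \<Rightarrow> ('a \<times> 'a \<times> 'a) set" where
  "curve_points F = {(x, y, z) \<in> proj_points. eval3 F x y z = 0}"

definition line_points :: "'a::field \<Rightarrow> 'a \<Rightarrow> 'a \<Rightarrow> ('a \<times> 'a \<times> 'a) set" where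
  "line_points a b c = {(x, y, z) \<in> proj_points. a * x + b * y + c * z = 0}"

definition is_Fq_line :: "('a::field \<times> 'a \<times> 'a) set \<Rightarrow> bool" where
  "is_Fq_line l \<longleftrightarrow> (\<exists>a b c. (a, b, c) \<noteq> (0, 0, 0) \<and> l = line_points a b c)"

definition no_Fq_linear_component :: "'a::field poly3 \<Rightarrow> bool" where
  "no_Fq_linear_component F \<longleftrightarrow>
     (\<forall>a b c. (a, b, c) \<noteq> (0, 0, 0) \<longrightarrow> \<not> linear_form a b c dvd F)"

end

theory Submission
  imports Defs
begin


definition eval2 :: "'a::comm_semiring_1 poly poly \<Rightarrow> 'a \<Rightarrow> 'a \<Rightarrow> 'a" where
  "eval2 G x y = poly (poly G [:y:]) x"

definition hom2 :: "'a::zero poly poly \<Rightarrow> nat \<Rightarrow> bool" where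
  "hom2 G n \<longleftrightarrow> (\<forall>a b. coeff (coeff G b) a \<noteq> 0 \<longrightarrow> a + b = n)"

definition cf :: "'a::zero poly poly \<Rightarrow> nat \<Rightarrow> nat \<Rightarrow> 'a" where
  "cf G n b = coeff (coeff G b) (n - b)"

lemma hom2_coeff_high: "hom2 G n \<Longrightarrow> b > n \<Longrightarrow> coeff G b = 0"
  unfolding hom2_def by (intro poly_eqI) force

lemma hom2_coeff_mono:
  assumes h: "hom2 G n" "b \<le> n" shows "coeff G b = monom (cf G n b) (n - b)"
proof (rule poly_eqI)
  fix a
  show "coeff (coeff G b) a = coeff (monom (cf G n b) (n - b)) a"
  proof (cases "a = n - b")
    case True then show ?thesis by (simp add: cf_def)
  next
    case False
    then have "a + b \<noteq> n" using h(2) by linarith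
    then have "coeff (coeff G b) a = 0" using h(1) unfolding hom2_def by blast
    then show ?thesis using False by (simp add: coeff_monom)
  qed
qed

lemma hom2_nf:
  assumes "hom2 G n"
  shows "G = (\<Sum>b\<le>n. monom (monom (cf G n b) (n - b)) b)"
proof (rule poly_eqI)
  fix b
  show "coeff G b = coeff (\<Sum>b\<le>n. monom (monom (cf G n b) (n - b)) b) b"
  proof (cases "b \<le> n")
    case True
    then show ?thesis using hom2_coeff_mono[OF assms True]
      by (simp add: coeff_sum coeff_monom)
  next
    case False
    then show ?thesis using hom2_coeff_high[OF assms]
      by (simp add: coeff_sum coeff_monom)
  qed
qed

lemma eval2_sum: "eval2 (\<Sum>k\<in>A. f k) x y = (\<Sum>k\<in>A. eval2 (f k) x y)"
  unfolding eval2_def by (simp add: poly_sum)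

lemma eval2_monom: "eval2 (monom (monom c m) b) x y = c * x ^ m * y ^ b"
  unfolding eval2_def poly_monom poly_mult poly_power by simp

lemma hom2_eval:
  assumes "hom2 G n"
  shows "eval2 G x y = (\<Sum>b\<le>n. cf G n b * x ^ (n - b) * y ^ b)"
  by (subst hom2_nf[OF assms]) (simp add: eval2_sum eval2_monom)

lemma hom2_scale:
  assumes "hom2 G n"
  shows "eval2 G (l * x) (l * y) = l ^ n * eval2 G x y"
proof -
  have "eval2 G (l * x) (l * y) = (\<Sum>b\<le>n. l ^ n * (cf G n b * x ^ (n - b) * y ^ b))"
    unfolding hom2_eval[OF assms]
  proof (intro sum.cong refl)
    fix b assume "b \<in> {..n}"
    then have "l ^ n = l ^ (n - b) * l ^ b" by (metis le_add_diff_inverse2 power_add atMost_iff)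
    then show "cf G n b * (l * x) ^ (n - b) * (l * y) ^ b = l ^ n * (cf G n b * x ^ (n - b) * y ^ b)"
      by (simp add: power_mult_distrib algebra_simps)
  qed
  then show ?thesis by (simp add: hom2_eval[OF assms] sum_distrib_left)
qed

lemma hom2_eval01:
  assumes "hom2 G n" shows "eval2 G 0 1 = cf G n n"
proof -
  have "eval2 G 0 1 = (\<Sum>b\<le>n. if b = n then cf G n b else 0)"
    unfolding hom2_eval[OF assms] by (intro sum.cong refl) (auto simp: power_0_left)
  then show ?thesis by simp
qed

lemma hom2_sum: "(\<And>k. k \<in> A \<Longrightarrow> hom2 (f k) n) \<Longrightarrow> hom2 (\<Sum>k\<in>A. f k) n"
  unfolding hom2_def coeff_sum
  by (smt (verit) sum.neutral)

lemma hom2_0[simp]: "hom2 0 n" by (simp add: hom2_def)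

lemma hom2_mult:
  fixes G H :: "'a::comm_semiring_1 poly poly"
  assumes "hom2 G n" "hom2 H m"
  shows "hom2 (G * H) (n + m)"
  unfolding hom2_def
proof (intro allI impI)
  fix a b
  assume ne: "coeff (coeff (G * H) b) a \<noteq> 0"
  have "coeff (coeff (G * H) b) a = (\<Sum>i\<le>b. \<Sum>j\<le>a. coeff (coeff G i) j * coeff (coeff H (b - i)) (a - j))"
    by (simp add: coeff_mult coeff_sum)
  with ne obtain i j where ij: "i \<le> b" "j \<le> a" "coeff (coeff G i) j * coeff (coeff H (b - i)) (a - j) \<noteq> 0"
    by (metis (no_types, lifting) atMost_iff sum.neutral)
  then have "coeff (coeff G i) j \<noteq> 0" "coeff (coeff H (b - i)) (a - j) \<noteq> 0" by auto
  then have "j + i = n" "(a - j) + (b - i) = m" using assms unfolding hom2_def by blast+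
  with ij show "a + b = n + m" by linarith
qed

lemma hom2_power:
  fixes t :: "'a::comm_semiring_1 poly poly"
  assumes "hom2 t 1"
  shows "hom2 (t ^ k) k"
proof (induction k)
  case 0
  then show ?case by (simp add: hom2_def coeff_1 split: if_splits)
next
  case (Suc k)
  then show ?case using hom2_mult[OF assms Suc] by simp
qed

lemma hom2_coeffF:
  assumes "homogeneous3 F d"
  shows "hom2 (coeff F k) (d - k)" "k > d \<Longrightarrow> coeff F k = 0"
proof -
  show "hom2 (coeff F k) (d - k)"
    using assms unfolding homogeneous3_def hom2_def mcoeff_def by force
  show "k > d \<Longrightarrow> coeff F k = 0"
    using assms unfolding homogeneous3_def mcoeff_def by (intro poly_eqI) force
qed



lemma eval2_add[simp]: "eval2 (G + H) x y = eval2 G x y + eval2 H x y"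
  by (simp add: eval2_def)
lemma eval2_mult[simp]: "eval2 (G * H) x y = eval2 G x y * eval2 H x y"
  by (simp add: eval2_def)
lemma eval2_power[simp]: "eval2 (G ^ k) x y = eval2 G x y ^ k"
  by (induction k) (simp_all add: eval2_def)
lemma eval2_smult[simp]: "eval2 (smult p G) x y = poly p x * eval2 G x y"
  by (simp add: eval2_def)
lemma eval2_const[simp]: "eval2 [:[:z:]:] x y = z"
  by (simp add: eval2_def)

lemma eval3_eval2: "eval3 F x y z = eval2 (poly F [:[:z:]:]) x y"
  by (simp add: eval3_def eval2_def)

lemma eval3_expand:
  assumes "degree F \<le> N"
  shows "eval3 F x y z = (\<Sum>k\<le>N. eval2 (coeff F k) x y * z ^ k)"
proof -
  have "poly F [:[:z:]:] = poly (\<Sum>i\<le>N. monom (coeff F i) i) [:[:z:]:]"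
    using poly_as_sum_of_monoms'[OF assms] by simp
  also have "\<dots> = (\<Sum>i\<le>N. coeff F i * [:[:z:]:] ^ i)"
    by (simp add: poly_sum poly_monom)
  finally show ?thesis unfolding eval3_eval2 by (simp add: eval2_sum)
qed

lemma eval2_poly_subst: "eval2 (poly F t) x y = eval3 F x y (eval2 t x y)"
proof (induction F)
  case 0
  then show ?case by (simp add: eval3_def eval2_def)
next
  case (pCons a p)
  then show ?case by (simp add: eval3_eval2)
qed

lemma hom2_poly_subst:
  fixes F :: "'a::comm_ring_1 poly3"
  assumes "homogeneous3 F d" "hom2 t 1"
  shows "hom2 (poly F t) d"
proof -
  have "poly F t = (\<Sum>k\<le>degree F. coeff F k * t ^ k)" by (rule poly_altdef)
  moreover have "hom2 (coeff F k * t ^ k) d" for k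
  proof (cases "k \<le> d")
    case True
    have "hom2 (coeff F k * t ^ k) (d - k + k)"
      by (intro hom2_mult hom2_power hom2_coeffF(1)[OF assms(1)] assms(2))
    with True show ?thesis by simp
  next
    case False
    then show ?thesis using hom2_coeffF(2)[OF assms(1)] by simp
  qed
  ultimately show ?thesis by (simp add: hom2_sum)
qed

lemma monom_1_pCons: "monom c 1 = [:0, c:]"
  by (simp add: monom_Suc monom_0)

lemma hom2_subst_line:
  fixes G :: "'a::comm_ring_1 poly poly"
  assumes "hom2 G n"
  shows "poly G [:0, c:] = monom (eval2 G 1 c) n"
proof -
  have "poly G [:0, c:] = (\<Sum>b\<le>n. monom (cf G n b) (n - b) * monom (c ^ b) b)"
    by (subst hom2_nf[OF assms]) (simp add: poly_sum poly_monom monom_power flip: monom_1_pCons)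
  also have "\<dots> = (\<Sum>b\<le>n. monom (cf G n b * c ^ b) n)"
    by (intro sum.cong refl) (simp add: mult_monom)
  also have "\<dots> = monom (eval2 G 1 c) n"
    by (simp add: hom2_eval[OF assms] monom_sum)
  finally show ?thesis .
qed

definition P1 :: "('a::field \<times> 'a) set" where
  "P1 = {(x, y). x = 1 \<or> (x = 0 \<and> y = 1)}"

lemma binary_lemma:
  fixes c :: "nat \<Rightarrow> 'a::field"
  assumes S: "S \<subseteq> P1" "finite S" "n < card S"
    and van: "\<And>x y. (x, y) \<in> S \<Longrightarrow> (\<Sum>b\<le>n. c b * x ^ (n - b) * y ^ b) = 0"
  shows "\<forall>b\<le>n. c b = 0"
proof -
  define h where "h = (\<Sum>b\<le>n. monom (c b) b)"
  have coeffh: "coeff h b = (if b \<le> n then c b else 0)" for b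
    by (simp add: h_def coeff_sum coeff_monom)
  have degh: "degree h \<le> n"
    by (rule degree_le) (simp add: coeffh)
  have polyh: "poly h y = (\<Sum>b\<le>n. c b * 1 ^ (n - b) * y ^ b)" for y
    by (simp add: h_def poly_sum poly_monom)
  define S1 where "S1 = {y. (1, y) \<in> S}"
  have S1roots: "S1 \<subseteq> {y. poly h y = 0}"
  proof
    fix y assume "y \<in> S1"
    then have "(1, y) \<in> S" by (simp add: S1_def)
    from van[OF this] show "y \<in> {y. poly h y = 0}" by (simp add: polyh)
  qed
  have Ssub: "S \<subseteq> Pair (1::'a) ` S1 \<union> (if (0,1) \<in> S then {(0,1)} else {})"
    using S(1) unfolding P1_def S1_def by auto
  have fS1: "finite S1"
  proof -
    have "inj_on (Pair (1::'a)) S1" by (auto simp: inj_on_def)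
    moreover have "Pair (1::'a) ` S1 \<subseteq> S" unfolding S1_def by auto
    ultimately show ?thesis using S(2) finite_imageD finite_subset by metis
  qed
  have cardS: "card S \<le> card S1 + (if (0,1) \<in> S then 1 else 0)"
  proof -
    have "card S \<le> card (Pair (1::'a) ` S1 \<union> (if (0,1) \<in> S then {(0,1)} else {}))"
      using Ssub fS1 by (intro card_mono) simp_all
    also have "\<dots> \<le> card (Pair (1::'a) ` S1) + card (if (0::'a,1::'a) \<in> S then {(0::'a,1::'a)} else {})"
      by (rule card_Un_le)
    also have "\<dots> \<le> card S1 + (if (0,1) \<in> S then 1 else 0)"
      by (simp add: card_image_le fS1)
    finally show ?thesis .
  qed
  have "h = 0"
  proof (rule ccontr)
    assume hne: "h \<noteq> 0"
    have "card S1 \<le> card {y. poly h y = 0}"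
      by (intro card_mono poly_roots_finite hne S1roots)
    also have "\<dots> \<le> degree h" by (rule card_poly_roots_bound[OF hne])
    finally have c1: "card S1 \<le> degree h" .
    show False
    proof (cases "(0,1) \<in> S")
      case True
      have "(\<Sum>b\<le>n. c b * 0 ^ (n - b) * 1 ^ b) = 0" using van[OF True] .
      moreover have "(\<Sum>b\<le>n. c b * (0::'a) ^ (n - b) * 1 ^ b) = (\<Sum>b\<le>n. if b = n then c b else 0)"
        by (intro sum.cong refl) (auto simp: power_0_left)
      ultimately have cn: "c n = 0" by simp
      have "degree h < n"
      proof -
        have "degree h \<noteq> n" using cn hne coeffh
          by (metis leading_coeff_0_iff order_refl)
        then show ?thesis using degh by simp
      qed
      then show False using c1 cardS True S(3) by simp
    next
      case False
      then show False using c1 cardS S(3) degh by simp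
    qed
  qed
  then show ?thesis using coeffh by (metis coeff_0)
qed



lemma lf_gamma:
  fixes a b c :: "'a::field"
  assumes "c \<noteq> 0"
  shows "[:- [:[:0, - a / c:], [:- b / c:]:], 1:] = linear_form a b c * [:[:[:1 / c:]:]:]"
  using assms by (simp add: linear_form_def flip: one_pCons)

lemma lf_beta:
  fixes a b :: "'a::field"
  assumes "b \<noteq> 0"
  shows "[:- [:0, - a / b:], 1:] = [:[:0, a:], [:b:]:] * [:[:1 / b:]:]"
  using assms by (simp add: )

lemma lf_alpha:
  fixes a :: "'a::field"
  assumes "a \<noteq> 0"
  shows "[:[:0, 1:]:] = [:[:0, a:], [:0:]:] * [:[:1 / a:]:]"
  using assms by (simp add: )

lemma lf_zero: "linear_form a b 0 = [:[:[:0, a:], [:b:]:]:]"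
  by (simp add: linear_form_def)

lemma hom2_t:
  fixes u v :: "'a::comm_ring_1"
  shows "hom2 [:[:0, u:], [:v:]:] 1"
  unfolding hom2_def by (auto simp: coeff_pCons split: nat.splits)

lemma eval2_t: "eval2 [:[:0, u:], [:v:]:] x y = u * x + v * y"
  by (simp add: eval2_def algebra_simps)

lemma card_ge2: "CARD('a::{finite,field}) \<ge> 2"
proof -
  have "{0::'a, 1} \<subseteq> UNIV" by simp
  then have "card {0::'a, 1} \<le> CARD('a)" by (intro card_mono) auto
  then show ?thesis by simp
qed




lemma line_bound_gamma:
  fixes F :: "'a::{finite,field} poly3"
  assumes hom: "homogeneous3 F (CARD('a) - 1)" and g: "c \<noteq> 0"
    and many: "CARD('a) \<le> card (line_points a b c \<inter> curve_points F)"
  shows "linear_form a b c dvd F"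
proof -
  define d where "d = CARD('a) - 1"
  define C' where "C' = line_points a b c \<inter> curve_points F"
  define t where "t = [:[:0, - a / c:], [:- b / c:]:]"
  define R where "R = poly F t"
  have ht: "hom2 t 1" unfolding t_def by (rule hom2_t)
  have hR: "hom2 R d" unfolding R_def d_def by (rule hom2_poly_subst[OF hom ht])
  define gm where "gm = (\<lambda>(x::'a, y::'a, z::'a). (x, y))"
  have inj: "inj_on gm C'"
  proof (rule inj_onI)
    fix p1 p2 assume "p1 \<in> C'" "p2 \<in> C'" "gm p1 = gm p2"
    then show "p1 = p2" using g
      by (cases p1; cases p2) (auto simp: C'_def line_points_def gm_def,
          metis add.commute add_diff_cancel_right' mult_cancel_left)
  qed
  have sub: "gm ` C' \<subseteq> P1"
    using g by (auto simp: C'_def line_points_def proj_points_def gm_def P1_def)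
  have cardS: "d < card (gm ` C')"
    using many card_image[OF inj] card_ge2[where 'a='a] unfolding d_def C'_def by simp
  have van: "(\<Sum>k\<le>d. cf R d k * x ^ (d - k) * y ^ k) = 0" if "(x, y) \<in> gm ` C'" for x y
  proof -
    from that obtain p where p: "p \<in> C'" "(x, y) = gm p" by blast
    obtain z where z: "(x, y, z) \<in> C'" using p by (cases p) (auto simp: gm_def)
    then have "a * x + b * y + c * z = 0" "eval3 F x y z = 0"
      by (auto simp: C'_def line_points_def curve_points_def)
    then have "z = eval2 t x y" using g by (simp add: t_def eval2_t field_simps) algebra
    then have "eval2 R x y = 0" unfolding R_def eval2_poly_subst
      using \<open>eval3 F x y z = 0\<close> by simp
    then show ?thesis using hom2_eval[OF hR] by simp
  qed
  have "\<forall>k\<le>d. cf R d k = 0"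
    by (rule binary_lemma[OF sub _ cardS van]) simp_all
  then have "R = 0" by (subst hom2_nf[OF hR]) simp
  then have "[:- t, 1:] dvd F" unfolding R_def by (simp add: poly_eq_0_iff_dvd)
  then show ?thesis unfolding t_def lf_gamma[OF g] using dvd_mult_left by blast
qed




lemma line_bound_zero:
  fixes F :: "'a::{finite,field} poly3"
  assumes hom: "homogeneous3 F (CARD('a) - 1)" and nz: "(a, b) \<noteq> (0, 0)"
    and many: "CARD('a) \<le> card (line_points a b 0 \<inter> curve_points F)"
  shows "linear_form a b 0 dvd F"
proof -
  define d where "d = CARD('a) - 1"
  define C' where "C' = line_points a b 0 \<inter> curve_points F"
  define x0 where "x0 = (if b \<noteq> 0 then 1 else (0::'a))"
  define y0 where "y0 = (if b \<noteq> 0 then - a / b else 1)"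
  define gm where "gm = (\<lambda>(x::'a, y::'a, z::'a). if b \<noteq> 0 then (x, z) else (y, z))"
  have inj: "inj_on gm C'"
  proof (rule inj_onI)
    fix p1 p2 assume "p1 \<in> C'" "p2 \<in> C'" "gm p1 = gm p2"
    then show "p1 = p2" using nz
      by (cases p1; cases p2) (auto simp: C'_def line_points_def proj_points_def gm_def split: if_splits,
          metis add_left_cancel mult_cancel_left)
  qed
  have sub: "gm ` C' \<subseteq> P1"
    using nz by (auto simp: C'_def line_points_def proj_points_def gm_def P1_def split: if_splits)
  have cardS: "d < card (gm ` C')"
    using many card_image[OF inj] card_ge2[where 'a='a] unfolding d_def C'_def by simp
  have pt: "x = l * x0 \<and> y = l * y0 \<and> z = w" if "(x, y, z) \<in> C'" "gm (x, y, z) = (l, w)" for x y z l w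
    using that nz by (auto simp: C'_def line_points_def proj_points_def gm_def x0_def y0_def
        field_simps split: if_splits, simp add: eq_neg_iff_add_eq_0 add.commute)
  have degF: "degree F \<le> d"
    by (rule degree_le) (use hom2_coeffF(2)[OF hom] in \<open>auto simp: d_def\<close>)
  have van: "(\<Sum>k\<le>d. eval2 (coeff F k) x0 y0 * l ^ (d - k) * w ^ k) = 0"
    if "(l, w) \<in> gm ` C'" for l w
  proof -
    from that obtain p where p: "p \<in> C'" "(l, w) = gm p" by blast
    obtain x y z where xyz: "(x, y, z) \<in> C'" "gm (x, y, z) = (l, w)" using p by (cases p) auto
    then have e: "x = l * x0" "y = l * y0" "z = w" using pt by blast+
    have "eval3 F x y z = 0" using xyz(1) by (auto simp: C'_def curve_points_def)
    then have "(\<Sum>k\<le>d. eval2 (coeff F k) x y * z ^ k) = 0" using eval3_expand[OF degF] by simp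
    moreover have "eval2 (coeff F k) x y = l ^ (d - k) * eval2 (coeff F k) x0 y0" for k
      unfolding e using hom2_scale[OF hom2_coeffF(1)[OF hom]] d_def by simp
    ultimately show ?thesis using e by (simp add: algebra_simps)
  qed
  have g0: "\<forall>k\<le>d. eval2 (coeff F k) x0 y0 = 0"
    by (rule binary_lemma[OF sub _ cardS van]) simp_all
  define L0 where "L0 = [:[:0, a:], [:b:]:]"
  have "L0 dvd coeff F k" for k
  proof (cases "k \<le> d")
    case False
    then show ?thesis using hom2_coeffF(2)[OF hom] d_def by simp
  next
    case True
    have hk: "hom2 (coeff F k) (d - k)" using hom2_coeffF(1)[OF hom] d_def by simp
    have ek: "eval2 (coeff F k) x0 y0 = 0" using g0 True by simp
    show ?thesis
    proof (cases "b = 0")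
      case False
      have "poly (coeff F k) [:0, - a / b:] = 0"
        using hom2_subst_line[OF hk] ek False by (simp add: x0_def y0_def)
      then have "[:- [:0, - a / b:], 1:] dvd coeff F k" by (simp add: poly_eq_0_iff_dvd)
      then show ?thesis unfolding lf_beta[OF False] L0_def using dvd_mult_left by blast
    next
      case True
      then have a: "a \<noteq> 0" using nz by simp
      have "cf (coeff F k) (d - k) (d - k) = 0"
        using ek hom2_eval01[OF hk] True by (simp add: x0_def y0_def)
      then have "coeff (coeff (coeff F k) j) 0 = 0" for j
        using hk unfolding hom2_def cf_def by (metis add_0 diff_self_eq_0)
      then have "[:0, 1:] dvd coeff (coeff F k) j" for j
        using poly_eq_0_iff_dvd[of "coeff (coeff F k) j" 0] by (simp add: poly_0_coeff_0)
      then have "[:[:0, 1:]:] dvd coeff F k" by (simp add: const_poly_dvd_iff)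
      then show ?thesis unfolding lf_alpha[OF a] L0_def True using dvd_mult_left by blast
    qed
  qed
  then have "[:L0:] dvd F" by (simp add: const_poly_dvd_iff)
  then show ?thesis by (simp add: lf_zero L0_def)
qed



definition norm3 :: "'a::field \<times> 'a \<times> 'a \<Rightarrow> 'a \<times> 'a \<times> 'a" where
  "norm3 v = (case v of (a, b, c) \<Rightarrow>
     if a \<noteq> 0 then (1, b / a, c / a) else if b \<noteq> 0 then (0, 1, c / b) else (0, 0, 1))"

definition cross :: "'a::field \<times> 'a \<times> 'a \<Rightarrow> 'a \<times> 'a \<times> 'a \<Rightarrow> 'a \<times> 'a \<times> 'a" where
  "cross P Q = (case P of (p1, p2, p3) \<Rightarrow> case Q of (q1, q2, q3) \<Rightarrow>
     (p2 * q3 - p3 * q2, p3 * q1 - p1 * q3, p1 * q2 - p2 * q1))"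

definition lp :: "'a::field \<times> 'a \<times> 'a \<Rightarrow> ('a \<times> 'a \<times> 'a) set" where
  "lp v = (case v of (a, b, c) \<Rightarrow> line_points a b c)"

lemma line_points_scale:
  fixes k :: "'a::field"
  assumes "k \<noteq> 0"
  shows "line_points (k * a) (k * b) (k * c) = line_points a b c"
proof -
  have "k * a * x + k * b * y + k * c * z = k * (a * x + b * y + c * z)" for x y z
    by (simp add: algebra_simps)
  then show ?thesis using assms unfolding line_points_def by auto
qed

lemma norm3_scale:
  assumes "v \<noteq> (0, 0, 0)"
  shows "\<exists>k. k \<noteq> 0 \<and> norm3 v = (case v of (a, b, c) \<Rightarrow> (k * a, k * b, k * c))"
proof -
  obtain a b c where v: "v = (a, b, c)" by (cases v)
  show ?thesis
  proof (cases "a \<noteq> 0")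
    case True
    then show ?thesis unfolding v norm3_def by (intro exI[of _ "1 / a"]) auto
  next
    case False
    show ?thesis
    proof (cases "b \<noteq> 0")
      case True
      then show ?thesis using False unfolding v norm3_def by (intro exI[of _ "1 / b"]) auto
    next
      case False': False
      then have "c \<noteq> 0" using False assms v by auto
      then show ?thesis using False False' unfolding v norm3_def by (intro exI[of _ "1 / c"]) auto
    qed
  qed
qed

lemma lp_norm3:
  assumes "v \<noteq> (0, 0, 0)" shows "lp (norm3 v) = lp v"
proof -
  obtain a b c where v: "v = (a, b, c)" by (cases v)
  obtain k where k: "k \<noteq> 0" "norm3 v = (k * a, k * b, k * c)"
    using norm3_scale[OF assms] v by auto
  have "lp (norm3 v) = line_points (k * a) (k * b) (k * c)" using k(2) by (simp add: lp_def)
  also have "\<dots> = lp v" using line_points_scale[OF k(1)] v by (simp add: lp_def)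
  finally show ?thesis .
qed

lemma norm3_proj: "v \<noteq> (0, 0, 0) \<Longrightarrow> norm3 v \<in> proj_points"
  unfolding norm3_def proj_points_def by (cases v) auto

lemma proj_nz: "v \<in> proj_points \<Longrightarrow> v \<noteq> (0, 0, 0)"
  unfolding proj_points_def by auto

lemma cross_nz:
  assumes "P \<in> proj_points" "Q \<in> proj_points" "P \<noteq> Q"
  shows "cross P Q \<noteq> (0, 0, 0)"
  using assms unfolding proj_points_def cross_def by (cases P; cases Q) (auto simp: algebra_simps)

lemma cross_perp:
  shows "(case cross P Q of (a, b, c) \<Rightarrow> a * fst Q + b * fst (snd Q) + c * snd (snd Q)) = 0"
    and "(case cross P Q of (a, b, c) \<Rightarrow> a * fst P + b * fst (snd P) + c * snd (snd P)) = 0"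
  unfolding cross_def by (cases P; cases Q; simp add: algebra_simps)+

lemma lp_mem: "Q \<in> lp v \<longleftrightarrow> Q \<in> proj_points \<and>
    (case v of (a, b, c) \<Rightarrow> a * fst Q + b * fst (snd Q) + c * snd (snd Q)) = 0"
  unfolding lp_def line_points_def by (cases v; cases Q) auto

lemma card_P1: "card (P1 :: ('a::{finite,field} \<times> 'a) set) = CARD('a) + 1"
proof -
  have "P1 = Pair (1::'a) ` (UNIV::'a set) \<union> {(0, 1)}" unfolding P1_def by auto
  moreover have "card (Pair (1::'a) ` (UNIV::'a set)) = CARD('a)"
    by (rule card_image) (auto simp: inj_on_def)
  moreover have "(0::'a, 1::'a) \<notin> Pair (1::'a) ` (UNIV::'a set)" by auto
  moreover have "finite (Pair (1::'a) ` (UNIV::'a set))" by simp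
  ultimately show ?thesis by (metis Un_insert_right card_insert_disjoint sup_bot.right_neutral Suc_eq_plus1)
qed

lemma line_card:
  fixes a b c :: "'a::{finite,field}"
  assumes "(a, b, c) \<noteq> (0, 0, 0)"
  shows "card (line_points a b c) \<le> CARD('a) + 1"
proof -
  define gm where "gm = (\<lambda>(x::'a, y::'a, z::'a).
     if c \<noteq> 0 then (x, y) else if b \<noteq> 0 then (x, z) else (y, z))"
  have inj: "inj_on gm (line_points a b c)"
  proof (rule inj_onI)
    fix p1 p2 assume "p1 \<in> line_points a b c" "p2 \<in> line_points a b c" "gm p1 = gm p2"
    then show "p1 = p2" using assms
      by (cases p1; cases p2) (auto simp: line_points_def proj_points_def gm_def split: if_splits,
          (metis add_left_cancel mult_cancel_left)+)
  qed
  have sub: "gm ` line_points a b c \<subseteq> P1"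
    using assms by (auto simp: line_points_def proj_points_def gm_def P1_def split: if_splits)
  have "card (line_points a b c) = card (gm ` line_points a b c)" using card_image[OF inj] by simp
  also have "\<dots> \<le> card (P1::('a \<times> 'a) set)" using sub by (intro card_mono) auto
  finally show ?thesis by (simp add: card_P1)
qed



theorem corollary3p5:
  fixes F :: "'a::{finite, field} poly3"
    and l1 l2 :: "('a \<times> 'a \<times> 'a) set"
    and P :: "'a \<times> 'a \<times> 'a"
    and i j :: nat
  assumes "CARD('a) \<ge> 5"
    and "F \<noteq> 0"
    and "homogeneous3 F (CARD('a) - 1)"
    and "no_Fq_linear_component F"
    and "card (curve_points F) = (CARD('a) - 1)^2"
    and "is_Fq_line l1" and "is_Fq_line l2" and "l1 \<noteq> l2"
    and "card (l1 \<inter> curve_points F) = i"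
    and "card (l2 \<inter> curve_points F) = j"
    and "l1 \<inter> l2 = {P}"
    and "P \<in> curve_points F"
  shows "i + j \<ge> CARD('a)"
proof -
  note hom = assms(3)
  define q where "q = CARD('a)"
  define C where "C = curve_points F"
  have q2: "q \<ge> 2" unfolding q_def by (rule card_ge2)
  have bound: "card (line_points a b c \<inter> C) \<le> q - 1" if nz: "(a, b, c) \<noteq> (0, 0, 0)" for a b c
  proof (rule ccontr)
    assume "\<not> ?thesis"
    then have many: "CARD('a) \<le> card (line_points a b c \<inter> curve_points F)"
      unfolding q_def C_def by linarith
    have "linear_form a b c dvd F"
    proof (cases "c = 0")
      case True
      then have "(a, b) \<noteq> (0, 0)" using nz by auto
      then show ?thesis using line_bound_zero[OF hom _ ] many True by simp
    next
      case False
      then show ?thesis using line_bound_gamma[OF hom False many] by simp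
    qed
    then show False using assms(4) nz unfolding no_Fq_linear_component_def by blast
  qed
  have bound_lp: "card (lp v \<inter> C) \<le> q - 1" if "v \<in> proj_points" for v
    using bound[of "fst v" "fst (snd v)" "snd (snd v)"] proj_nz[OF that]
    by (cases v) (auto simp: lp_def)
  obtain a1 b1 c1 where l1: "(a1, b1, c1) \<noteq> (0, 0, 0)" "l1 = line_points a1 b1 c1"
    using assms(6) unfolding is_Fq_line_def by blast
  obtain a2 b2 c2 where l2: "(a2, b2, c2) \<noteq> (0, 0, 0)" "l2 = line_points a2 b2 c2"
    using assms(7) unfolding is_Fq_line_def by blast
  define v1 where "v1 = norm3 (a1, b1, c1)"
  define v2 where "v2 = norm3 (a2, b2, c2)"
  have v1: "v1 \<in> proj_points" "lp v1 = l1"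
    unfolding v1_def using norm3_proj[OF l1(1)] lp_norm3[OF l1(1)] l1(2) by (auto simp: lp_def)
  have v2: "v2 \<in> proj_points" "lp v2 = l2"
    unfolding v2_def using norm3_proj[OF l2(1)] lp_norm3[OF l2(1)] l2(2) by (auto simp: lp_def)
  have v12: "v1 \<noteq> v2" using v1 v2 assms(8) by auto
  have Pp: "P \<in> proj_points" using assms(12) unfolding curve_points_def by auto
  define D where "D = {v \<in> proj_points. P \<in> lp v}"
  have v1D: "v1 \<in> D" and v2D: "v2 \<in> D" using v1 v2 assms(11) unfolding D_def by auto
  obtain p1 p2 p3 where P: "P = (p1, p2, p3)" by (cases P)
  have cardD: "card D \<le> q + 1"
  proof -
    have "D \<subseteq> line_points p1 p2 p3"
      unfolding D_def using Pp by (auto simp: lp_mem line_points_def P algebra_simps)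
    then have "card D \<le> card (line_points p1 p2 p3)" by (intro card_mono) auto
    also have "\<dots> \<le> q + 1" unfolding q_def using proj_nz[OF Pp] P by (intro line_card) auto
    finally show ?thesis .
  qed
  define A where "A v = lp v \<inter> C - {P}" for v
  have cover: "C - {P} \<subseteq> (\<Union>v\<in>D. A v)"
  proof
    fix Q assume Q: "Q \<in> C - {P}"
    then have Qp: "Q \<in> proj_points" unfolding C_def curve_points_def by auto
    have wnz: "cross P Q \<noteq> (0, 0, 0)" using cross_nz[OF Pp Qp] Q by auto
    have "Q \<in> lp (cross P Q)" "P \<in> lp (cross P Q)"
      using cross_perp[where P=P and Q=Q] Qp Pp unfolding lp_mem by auto
    then have "Q \<in> lp (norm3 (cross P Q))" "P \<in> lp (norm3 (cross P Q))"
      using lp_norm3[OF wnz] by auto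
    moreover have "norm3 (cross P Q) \<in> proj_points" by (rule norm3_proj[OF wnz])
    ultimately show "Q \<in> (\<Union>v\<in>D. A v)" using Q unfolding D_def A_def by blast
  qed
  have cardA: "card (A v) = card (lp v \<inter> C) - 1" if "v \<in> D" for v
    using that assms(12) unfolding A_def D_def C_def by (simp add: card_Diff_singleton)
  have cardA_le: "card (A v) \<le> q - 2" if "v \<in> D" for v
    using cardA[OF that] bound_lp[of v] that unfolding D_def by auto
  have "card (C - {P}) \<le> card (\<Union>v\<in>D. A v)" using cover by (intro card_mono) auto
  also have "\<dots> \<le> (\<Sum>v\<in>D. card (A v))" by (rule card_UN_le) simp
  also have "\<dots> = card (A v1) + card (A v2) + (\<Sum>v\<in>D - {v1} - {v2}. card (A v))"
  proof -
    have s1: "(\<Sum>v\<in>D. card (A v)) = card (A v1) + (\<Sum>v\<in>D - {v1}. card (A v))"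
      by (rule sum.remove) (simp_all add: v1D)
    have s2: "(\<Sum>v\<in>D - {v1}. card (A v)) = card (A v2) + (\<Sum>v\<in>D - {v1} - {v2}. card (A v))"
      by (rule sum.remove) (use v2D v12 in auto)
    show ?thesis using s1 s2 by simp
  qed
  also have "\<dots> \<le> (i - 1) + (j - 1) + card (D - {v1} - {v2}) * (q - 2)"
  proof -
    have "card (A v1) = i - 1" using cardA[OF v1D] v1 assms(9) C_def by simp
    moreover have "card (A v2) = j - 1" using cardA[OF v2D] v2 assms(10) C_def by simp
    moreover have "(\<Sum>v\<in>D - {v1} - {v2}. card (A v)) \<le> card (D - {v1} - {v2}) * (q - 2)"
      using sum_bounded_above[of "D - {v1} - {v2}" "\<lambda>v. card (A v)" "q - 2"] cardA_le by auto
    ultimately show ?thesis by simp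
  qed
  finally have main: "card (C - {P}) \<le> (i - 1) + (j - 1) + card (D - {v1} - {v2}) * (q - 2)" .
  have cD: "card (D - {v1} - {v2}) \<le> q - 1"
    using cardD v1D v2D v12 by (simp add: card_Diff_singleton)
  have cC: "card (C - {P}) = (q - 1)^2 - 1"
    using assms(5) assms(12) unfolding C_def q_def by (simp add: card_Diff_singleton)
  have i1: "i \<ge> 1" using assms(9, 11, 12) l1 
    by (metis C_def One_nat_def Suc_leI card_gt_0_iff finite inf_commute disjoint_iff Int_iff insertI1)
  have j1: "j \<ge> 1" using assms(10, 11, 12)
    by (metis One_nat_def Suc_leI card_gt_0_iff finite disjoint_iff Int_iff insertI1)
  have "card (D - {v1} - {v2}) * (q - 2) \<le> (q - 1) * (q - 2)" using cD by (rule mult_right_mono) simp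
  with main cC have ineq: "(q - 1)^2 - 1 \<le> (i - 1) + (j - 1) + (q - 1) * (q - 2)" by linarith
  obtain r where r: "q = r + 2" using q2 by (metis add.commute le_Suc_ex)
  have "(q - 1)^2 - 1 = r * r + 2 * r" unfolding r by (simp add: power2_eq_square algebra_simps)
  moreover have "(q - 1) * (q - 2) = r * r + r" unfolding r by (simp add: algebra_simps)
  ultimately have "r \<le> (i - 1) + (j - 1)" using ineq by linarith
  then show ?thesis using i1 j1 r unfolding q_def by linarith
qed


end
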